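(* Let $\Gamma$ be a group and $\alpha\in\mathrm{Aut}(\Gamma)$. The centre $Z(G(\alpha))$ consists exactly of the elements of $K(\alpha)$ which, viewed as maps $\mathbb Q_2\to\Gamma$, are constant with value in $Z\Gamma\cap\Gamma^\alpha$.
   Context: $\{0,1\}^*$ denotes the finite words over $\{0,1\}$ (including the empty word), $|u|$ the length; $\mathfrak C=\{0,1\}^{\mathbb N}$; $\mathbb Q_2\subset\mathfrak C$ the eventually-zero sequences $u00\cdots$. A finite complete prefix code is a finite set $\{t_1,\dots,t_n\}\subset\{0,1\}^*$ such that every $x\in\mathfrak C$ has exactly one $t_i$ as prefix. Thompson's group $V$ is the group of homeomorphisms $v$ of $\mathfrak C$ for which there exist finite complete prefix codes $\{t_i\},\{s_i\}$ and a permutation $\sigma$ with $v(t_iw)=s_{\sigma(i)}w$. $K(\alpha)$ is the group of maps $a:\{0,1\}^*\to\Gamma$ (pointwise product) with $a(u)=\alpha(a(u0))$ for all $u$; $V$ acts on it by $\pi(v)(a)(s_{\sigma(i)}u)=a(t_iu)$ for all $i$, $u\in\{0,1\}^*$ (determining $\pi(v)(a)$ uniquely); $G(\alpha):=K(\alpha)\rtimes V$ with $vav^{-1}=\pi(v)(a)$. An element $a\in K(\alpha)$ is viewed as the map $\mathbb Q_2\to\Gamma$, $x\mapsto\alpha^{|u|}(a(u))$ where $x=u00\cdots$ (well defined, giving an isomorphism $K(\alpha)\cong\prod_{\mathbb Q_2}\Gamma$). $\Gamma^\alpha$ is the set of fixed points of $\alpha$ and $Z\Gamma$ the centre of $\Gamma$.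 *)

theory Defs
  imports "HOL-Analysis.Analysis" "HOL-Algebra.Group"
begin

text \<open>Finite words over {0,1} are bool lists (False = 0, True = 1); the Cantor space
  is nat \<Rightarrow> bool with the product topology.\<close>

definition pref :: "bool list \<Rightarrow> (nat \<Rightarrow> bool) \<Rightarrow> nat \<Rightarrow> bool" where
  "pref t w = (\<lambda>k. if k < length t then t ! k else w (k - length t))"

definition is_prefix_of :: "bool list \<Rightarrow> (nat \<Rightarrow> bool) \<Rightarrow> bool" where
  "is_prefix_of t x \<longleftrightarrow> (\<forall>i < length t. x i = t ! i)"

definition complete_prefix_code :: "bool list set \<Rightarrow> bool" where
  "complete_prefix_code T \<longleftrightarrow> finite T \<and> (\<forall>x. \<exists>!t. t \<in> T \<and> is_prefix_of t x)"

definition V_table ::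
  "((nat \<Rightarrow> bool) \<Rightarrow> (nat \<Rightarrow> bool)) \<Rightarrow> bool list list \<Rightarrow> bool list list \<Rightarrow> (nat \<Rightarrow> nat) \<Rightarrow> bool" where
  "V_table v ts ss \<sigma> \<longleftrightarrow> length ts = length ss \<and> distinct ts \<and> distinct ss
     \<and> complete_prefix_code (set ts) \<and> complete_prefix_code (set ss)
     \<and> \<sigma> permutes {..<length ts}
     \<and> (\<forall>i < length ts. \<forall>w. v (pref (ts ! i) w) = pref (ss ! \<sigma> i) w)"

definition ThompsonV :: "((nat \<Rightarrow> bool) \<Rightarrow> (nat \<Rightarrow> bool)) set" where
  "ThompsonV = {v. (\<exists>g. homeomorphism UNIV UNIV v g) \<and> (\<exists>ts ss \<sigma>. V_table v ts ss \<sigma>)}"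

definition Kalpha :: "('g, 'b) monoid_scheme \<Rightarrow> ('g \<Rightarrow> 'g) \<Rightarrow> (bool list \<Rightarrow> 'g) set" where
  "Kalpha \<Gamma> \<alpha> = {a. (\<forall>u. a u \<in> carrier \<Gamma>) \<and> (\<forall>u. a u = \<alpha> (a (u @ [False])))}"

definition piV :: "('g, 'b) monoid_scheme \<Rightarrow> ('g \<Rightarrow> 'g) \<Rightarrow> ((nat \<Rightarrow> bool) \<Rightarrow> (nat \<Rightarrow> bool))
     \<Rightarrow> (bool list \<Rightarrow> 'g) \<Rightarrow> (bool list \<Rightarrow> 'g)" where
  "piV \<Gamma> \<alpha> v a = (THE b. b \<in> Kalpha \<Gamma> \<alpha> \<and>
      (\<exists>ts ss \<sigma>. V_table v ts ss \<sigma> \<and>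
         (\<forall>i < length ts. \<forall>u. b (ss ! \<sigma> i @ u) = a (ts ! i @ u))))"

text \<open>G(\<alpha>) = K(\<alpha>) \<rtimes> V, elements (a, v) standing for a v, with v a v^{-1} = \<pi>(v)(a);
  V is a group of homeomorphisms under composition.\<close>
definition Galpha_carrier ::
  "('g, 'b) monoid_scheme \<Rightarrow> ('g \<Rightarrow> 'g) \<Rightarrow> ((bool list \<Rightarrow> 'g) \<times> ((nat \<Rightarrow> bool) \<Rightarrow> (nat \<Rightarrow> bool))) set" where
  "Galpha_carrier \<Gamma> \<alpha> = Kalpha \<Gamma> \<alpha> \<times> ThompsonV"

definition Galpha_mult ::
  "('g, 'b) monoid_scheme \<Rightarrow> ('g \<Rightarrow> 'g)
   \<Rightarrow> ((bool list \<Rightarrow> 'g) \<times> ((nat \<Rightarrow> bool) \<Rightarrow> (nat \<Rightarrow> bool)))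
   \<Rightarrow> ((bool list \<Rightarrow> 'g) \<times> ((nat \<Rightarrow> bool) \<Rightarrow> (nat \<Rightarrow> bool)))
   \<Rightarrow> ((bool list \<Rightarrow> 'g) \<times> ((nat \<Rightarrow> bool) \<Rightarrow> (nat \<Rightarrow> bool)))" where
  "Galpha_mult \<Gamma> \<alpha> g h =
     ((\<lambda>u. fst g u \<otimes>\<^bsub>\<Gamma>\<^esub> piV \<Gamma> \<alpha> (snd g) (fst h) u), snd g \<circ> snd h)"

definition Galpha_centre ::
  "('g, 'b) monoid_scheme \<Rightarrow> ('g \<Rightarrow> 'g) \<Rightarrow> ((bool list \<Rightarrow> 'g) \<times> ((nat \<Rightarrow> bool) \<Rightarrow> (nat \<Rightarrow> bool))) set" where
  "Galpha_centre \<Gamma> \<alpha> = {g \<in> Galpha_carrier \<Gamma> \<alpha>.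
      \<forall>h \<in> Galpha_carrier \<Gamma> \<alpha>. Galpha_mult \<Gamma> \<alpha> g h = Galpha_mult \<Gamma> \<alpha> h g}"

text \<open>Dyadic rationals Q_2: eventually zero sequences u00...\<close>
definition zeros :: "nat \<Rightarrow> bool" where "zeros = (\<lambda>_. False)"

definition Q2 :: "(nat \<Rightarrow> bool) set" where
  "Q2 = {x. \<exists>u. x = pref u zeros}"

text \<open>a \<in> K(\<alpha>) as a map Q_2 \<rightarrow> \<Gamma>: x = u00... \<mapsto> \<alpha>^{|u|}(a u).\<close>
definition Kval :: "('g \<Rightarrow> 'g) \<Rightarrow> (bool list \<Rightarrow> 'g) \<Rightarrow> (nat \<Rightarrow> bool) \<Rightarrow> 'g" where
  "Kval \<alpha> a x = (let u = (SOME u. x = pref u zeros) in (\<alpha> ^^ length u) (a u))"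

definition group_centre :: "('g, 'b) monoid_scheme \<Rightarrow> 'g set" where
  "group_centre \<Gamma> = {z \<in> carrier \<Gamma>. \<forall>g \<in> carrier \<Gamma>. z \<otimes>\<^bsub>\<Gamma>\<^esub> g = g \<otimes>\<^bsub>\<Gamma>\<^esub> z}"

definition fixed_points :: "('g, 'b) monoid_scheme \<Rightarrow> ('g \<Rightarrow> 'g) \<Rightarrow> 'g set" where
  "fixed_points \<Gamma> \<alpha> = {g \<in> carrier \<Gamma>. \<alpha> g = g}"

end

theory Submission
  imports Defs
begin

lemma cont_coord:
  fixes g :: "(nat \<Rightarrow> bool) \<Rightarrow> bool"
  assumes "\<And>x y. (\<forall>i<N. x i = y i) \<Longrightarrow> g x = g y"
  shows "continuous_on UNIV g"
proof -
  have "open (g -` B)" for B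
  proof -
    define cyl where "cyl x = (\<Inter>i\<in>{..<N}. (\<lambda>y. y i) -` {x i})" for x :: "nat \<Rightarrow> bool"
    have oc: "open (cyl x)" for x
      unfolding cyl_def
      by (intro open_INT ballI) (auto intro: continuous_on_open_vimage[THEN iffD1, rule_format, of UNIV, simplified] simp: open_discrete)
    have 1: "g -` B \<subseteq> (\<Union>x\<in>g -` B. cyl x)" by (auto simp: cyl_def)
    have 2: "x \<in> g -` B" if "y \<in> g -` B" "x \<in> cyl y" for x y
    proof -
      have "g x = g y" using assms[of x y] that by (auto simp: cyl_def)
      thus ?thesis using that by simp
    qed
    have 3: "(\<Union>x\<in>g -` B. cyl x) \<subseteq> g -` B"
    proof (rule UN_least, rule subsetI)
      fix x y assume "x \<in> g -` B" "y \<in> cyl x" thus "y \<in> g -` B" by (rule 2)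
    qed
    have "g -` B = (\<Union>x\<in>g -` B. cyl x)" using 1 3 by (rule subset_antisym)
    moreover have "open (\<Union>x\<in>g -` B. cyl x)" by (intro open_UN ballI oc)
    ultimately show ?thesis by simp
  qed
  thus ?thesis by (simp add: continuous_on_open_vimage)
qed

lemma cont_fun:
  fixes f :: "(nat \<Rightarrow> bool) \<Rightarrow> (nat \<Rightarrow> bool)"
  assumes "\<And>k. \<exists>N. \<forall>x y. (\<forall>i<N. x i = y i) \<longrightarrow> f x k = f y k"
  shows "continuous_on UNIV f"
proof (rule continuous_on_coordinatewise_then_product)
  fix k
  obtain N where "\<forall>x y. (\<forall>i<N. x i = y i) \<longrightarrow> f x k = f y k" using assms by blast
  thus "continuous_on UNIV (\<lambda>x. f x k)" by (intro cont_coord[of N]) auto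
qed

lemma pref_append: "pref (p @ q) w = pref p (pref q w)"
  by (auto simp: pref_def nth_append fun_eq_iff)

lemma pref_inj:
  assumes "\<And>w. pref p w = pref q w" shows "p = q"
proof -
  have len: "length p = length q"
  proof (rule ccontr)
    assume ne: "length p \<noteq> length q"
    show False
    proof (cases "length p < length q")
      case True
      have "pref p (\<lambda>_. \<not> q ! length p) (length p) = pref q (\<lambda>_. \<not> q ! length p) (length p)"
        using assms by simp
      thus False using True by (simp add: pref_def)
    next
      case False
      hence lt: "length q < length p" using ne by simp
      have "pref p (\<lambda>_. \<not> p ! length q) (length q) = pref q (\<lambda>_. \<not> p ! length q) (length q)"
        using assms by simp
      thus False using lt by (simp add: pref_def)
    qed
  qed
  show ?thesis
  proof (rule nth_equalityI[OF len])
    fix i assume "i < length p"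
    moreover have "pref p (\<lambda>_. False) i = pref q (\<lambda>_. False) i" using assms by simp
    ultimately show "p ! i = q ! i" using len by (simp add: pref_def)
  qed
qed

lemma K_iter:
  assumes "a \<in> Kalpha \<Gamma> \<alpha>"
  shows "a x = (\<alpha> ^^ n) (a (x @ replicate n False))"
proof (induction n)
  case 0 thus ?case by simp
next
  case (Suc n)
  have r: "replicate (Suc n) False = replicate n False @ [False]"
    by (simp add: replicate_append_same)
  have "a (x @ replicate n False) = \<alpha> (a ((x @ replicate n False) @ [False]))"
    using assms unfolding Kalpha_def mem_Collect_eq by blast
  moreover have "(\<alpha> ^^ Suc n) (a (x @ replicate (Suc n) False)) = (\<alpha> ^^ n) (\<alpha> (a ((x @ replicate n False) @ [False])))"
    by (simp only: r funpow_Suc_right o_apply append_assoc)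
  ultimately show ?case using Suc.IH by simp
qed

lemma app_rep_nth: "i < length x + n \<Longrightarrow> (x @ replicate n False) ! i = pref x zeros i"
  by (simp add: pref_def zeros_def nth_append)

lemma split_long:
  assumes "is_prefix_of s (pref x zeros)" "length s \<le> length x + n"
  shows "x @ replicate n False = s @ drop (length s) (x @ replicate n False)"
proof -
  have "take (length s) (x @ replicate n False) = s"
  proof (rule nth_equalityI)
    show "length (take (length s) (x @ replicate n False)) = length s" using assms(2) by simp
  next
    fix i assume "i < length (take (length s) (x @ replicate n False))"
    hence i: "i < length s" "i < length x + n" using assms(2) by auto
    have "take (length s) (x @ replicate n False) ! i = (x @ replicate n False) ! i"
      using i(1) by (rule nth_take)
    also have "\<dots> = pref x zeros i" using app_rep_nth[OF i(2)] .
    also have "\<dots> = s ! i" using assms(1) i(1) by (simp add: is_prefix_of_def)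
    finally show "take (length s) (x @ replicate n False) ! i = s ! i" .
  qed
  thus ?thesis by (metis append_take_drop_id)
qed

lemma code_index:
  assumes "complete_prefix_code (set ss)" "distinct ss"
  shows "\<exists>!j. j < length ss \<and> is_prefix_of (ss ! j) y"
proof -
  obtain t where t: "t \<in> set ss" "is_prefix_of t y"
    and u: "\<And>t'. t' \<in> set ss \<and> is_prefix_of t' y \<Longrightarrow> t' = t"
    using assms(1) unfolding complete_prefix_code_def by metis
  obtain j where j: "j < length ss" "ss ! j = t" using t(1) by (metis in_set_conv_nth)
  show ?thesis
  proof (rule ex1I[of _ j])
    show "j < length ss \<and> is_prefix_of (ss ! j) y" using j t by simp
  next
    fix k assume k: "k < length ss \<and> is_prefix_of (ss ! k) y"
    hence "ss ! k = t" using u by (simp)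
    thus "k = j" using j k assms(2) by (metis nth_eq_iff_index_eq)
  qed
qed

lemma table_index:
  assumes "V_table v ts ss \<sigma>"
  obtains i where "i < length ts" "is_prefix_of (ss ! \<sigma> i) y"
proof -
  have c: "complete_prefix_code (set ss)" "distinct ss" and p: "\<sigma> permutes {..<length ts}"
    and l: "length ts = length ss"
    using assms by (auto simp: V_table_def)
  obtain j where j: "j < length ss" "is_prefix_of (ss ! j) y" using code_index[OF c, of y] by blast
  have "\<sigma> (inv_into UNIV \<sigma> j) = j" using p by (simp add: permutes_inverses)
  moreover have "inv_into UNIV \<sigma> j < length ts" using p j l
    by (metis lessThan_iff permutes_in_image permutes_inv)
  ultimately show ?thesis using that j by metis
qed

lemma table_map:
  assumes "V_table v ts ss \<sigma>" "i < length ts" shows "\<sigma> i < length ss"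
  using assms unfolding V_table_def by (metis lessThan_iff permutes_in_image)

lemma K_unique:
  assumes inj: "inj v" and T1: "V_table v ts ss \<sigma>" and T2: "V_table v ts' ss' \<sigma>'"
    and c: "c \<in> Kalpha \<Gamma> \<alpha>" and d: "d \<in> Kalpha \<Gamma> \<alpha>"
    and hc: "\<forall>i<length ts. \<forall>u. c (ss ! \<sigma> i @ u) = a (ts ! i @ u)"
    and hd: "\<forall>i<length ts'. \<forall>u. d (ss' ! \<sigma>' i @ u) = a (ts' ! i @ u)"
  shows "c = d"
proof
  fix x
  obtain i where i: "i < length ts" "is_prefix_of (ss ! \<sigma> i) (pref x zeros)"
    using table_index[OF T1] by metis
  obtain i' where i': "i' < length ts'" "is_prefix_of (ss' ! \<sigma>' i') (pref x zeros)"
    using table_index[OF T2] by metis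
  define n where "n = length (ss ! \<sigma> i) + length (ss' ! \<sigma>' i')"
  define x' where "x' = x @ replicate n False"
  define u where "u = drop (length (ss ! \<sigma> i)) x'"
  define u' where "u' = drop (length (ss' ! \<sigma>' i')) x'"
  have e1: "x' = ss ! \<sigma> i @ u" unfolding u_def x'_def by (rule split_long[OF i(2)]) (simp add: n_def)
  have e2: "x' = ss' ! \<sigma>' i' @ u'" unfolding u'_def x'_def by (rule split_long[OF i'(2)]) (simp add: n_def)
  have v1: "v (pref (ts ! i @ u) w) = pref x' w" for w
    using T1 i(1) e1 by (simp add: pref_append V_table_def)
  have v2: "v (pref (ts' ! i' @ u') w) = pref x' w" for w
    using T2 i'(1) e2 by (simp add: pref_append V_table_def)
  have "ts ! i @ u = ts' ! i' @ u'"
    by (rule pref_inj) (use v1 v2 inj in \<open>metis injD\<close>)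
  hence "c x' = d x'" using hc hd i(1) i'(1) e1 e2 by metis
  thus "c x = d x" using K_iter[OF c, of x n] K_iter[OF d, of x n] x'_def by simp
qed

lemma K_carrier: "a \<in> Kalpha \<Gamma> \<alpha> \<Longrightarrow> a u \<in> carrier \<Gamma>"
  unfolding Kalpha_def mem_Collect_eq by blast

lemma K_rule: "a \<in> Kalpha \<Gamma> \<alpha> \<Longrightarrow> a u = \<alpha> (a (u @ [False]))"
  unfolding Kalpha_def mem_Collect_eq by blast

lemma is_prefix_pref: "is_prefix_of s (pref s w)"
  by (simp add: is_prefix_of_def pref_def)

lemma pref_snoc_zeros: "pref (x @ [False]) zeros = pref x zeros"
  by (auto simp: pref_def zeros_def nth_append fun_eq_iff)

lemma pow_carrier:
  assumes "\<And>g. g \<in> carrier \<Gamma> \<Longrightarrow> \<alpha> g \<in> carrier \<Gamma>" "g \<in> carrier \<Gamma>"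
  shows "(\<alpha> ^^ n) g \<in> carrier \<Gamma>"
  by (induction n) (use assms in auto)

lemma K_exists:
  assumes am: "\<And>g. g \<in> carrier \<Gamma> \<Longrightarrow> \<alpha> g \<in> carrier \<Gamma>" and T: "V_table v ts ss \<sigma>"
    and a: "a \<in> Kalpha \<Gamma> \<alpha>"
  shows "\<exists>b\<in>Kalpha \<Gamma> \<alpha>. \<forall>i<length ts. \<forall>u. b (ss ! \<sigma> i @ u) = a (ts ! i @ u)"
proof -
  have c: "complete_prefix_code (set ss)" "distinct ss" and p: "\<sigma> permutes {..<length ts}"
    and l: "length ts = length ss"
    using T by (auto simp: V_table_def)
  define J where "J x = (THE j. j < length ss \<and> is_prefix_of (ss ! j) (pref x zeros))" for x
  have J: "J x < length ss \<and> is_prefix_of (ss ! J x) (pref x zeros)" for x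
    unfolding J_def by (rule theI'[OF code_index[OF c]])
  have Jeq: "J x = j" if "j < length ss" "is_prefix_of (ss ! j) (pref x zeros)" for x j
    unfolding J_def by (rule the1_equality[OF code_index[OF c]]) (use that in simp)
  define b where "b x = (\<alpha> ^^ (length (ss ! J x) - length x))
      (a (ts ! inv_into UNIV \<sigma> (J x) @ drop (length (ss ! J x)) (x @ replicate (length (ss ! J x) - length x) False)))" for x
  have Jsnoc: "J (x @ [False]) = J x" for x
    using Jeq[of "J x" "x @ [False]"] J[of x] by (simp add: pref_snoc_zeros)
  have bK: "b \<in> Kalpha \<Gamma> \<alpha>"
    unfolding Kalpha_def
  proof (intro CollectI conjI allI)
    fix x
    show "b x \<in> carrier \<Gamma>" unfolding b_def
      by (intro pow_carrier[of \<Gamma> \<alpha>] am K_carrier[OF a])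
  next
    fix x
    define s where "s = ss ! J x"
    define t where "t = ts ! inv_into UNIV \<sigma> (J x)"
    have bx: "b x = (\<alpha> ^^ (length s - length x)) (a (t @ drop (length s) (x @ replicate (length s - length x) False)))"
      by (simp add: b_def s_def t_def)
    have bx0: "b (x @ [False]) = (\<alpha> ^^ (length s - Suc (length x))) (a (t @ drop (length s) ((x @ [False]) @ replicate (length s - Suc (length x)) False)))"
      by (simp add: b_def s_def t_def Jsnoc)
    show "b x = \<alpha> (b (x @ [False]))"
    proof (cases "length x < length s")
      case True
      then obtain m where m: "length s - length x = Suc m" "length s - Suc (length x) = m"
        by (metis Suc_diff_Suc)
      have "x @ replicate (Suc m) False = (x @ [False]) @ replicate m False"
        by (simp add: replicate_append_same[symmetric])
      thus ?thesis using bx bx0 m by simp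
    next
      case False
      hence z: "length s - length x = 0" "length s - Suc (length x) = 0" by auto
      have "drop (length s) (x @ [False]) = drop (length s) x @ [False]" using False by simp
      moreover have "a (t @ drop (length s) x) = \<alpha> (a ((t @ drop (length s) x) @ [False]))"
        by (rule K_rule[OF a])
      ultimately show ?thesis using bx bx0 z by simp
    qed
  qed
  have "\<forall>i<length ts. \<forall>u. b (ss ! \<sigma> i @ u) = a (ts ! i @ u)"
  proof (intro allI impI)
    fix i u assume i: "i < length ts"
    have si: "\<sigma> i < length ss" using table_map[OF T i] .
    have "J (ss ! \<sigma> i @ u) = \<sigma> i"
      by (rule Jeq[OF si]) (simp add: pref_append is_prefix_pref)
    moreover have "inv_into UNIV \<sigma> (\<sigma> i) = i" using p by (simp add: permutes_inverses)
    ultimately show "b (ss ! \<sigma> i @ u) = a (ts ! i @ u)" by (simp add: b_def)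
  qed
  thus ?thesis using bK by blast
qed

lemma piV_eq:
  assumes inj: "inj v" and T: "V_table v ts ss \<sigma>" and c: "c \<in> Kalpha \<Gamma> \<alpha>"
    and hc: "\<forall>i<length ts. \<forall>u. c (ss ! \<sigma> i @ u) = a (ts ! i @ u)"
  shows "piV \<Gamma> \<alpha> v a = c"
  unfolding piV_def
proof (rule the_equality)
  show "c \<in> Kalpha \<Gamma> \<alpha> \<and> (\<exists>ts ss \<sigma>. V_table v ts ss \<sigma> \<and> (\<forall>i<length ts. \<forall>u. c (ss ! \<sigma> i @ u) = a (ts ! i @ u)))"
    using c T hc by blast
next
  fix b assume "b \<in> Kalpha \<Gamma> \<alpha> \<and> (\<exists>ts ss \<sigma>. V_table v ts ss \<sigma> \<and> (\<forall>i<length ts. \<forall>u. b (ss ! \<sigma> i @ u) = a (ts ! i @ u)))"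
  then obtain ts' ss' \<sigma>' where b: "b \<in> Kalpha \<Gamma> \<alpha>" "V_table v ts' ss' \<sigma>'"
    "\<forall>i<length ts'. \<forall>u. b (ss' ! \<sigma>' i @ u) = a (ts' ! i @ u)" by blast
  show "b = c" by (rule K_unique[OF inj b(2) T b(1) c b(3) hc])
qed

lemma piV_prop:
  assumes am: "\<And>g. g \<in> carrier \<Gamma> \<Longrightarrow> \<alpha> g \<in> carrier \<Gamma>" and inj: "inj v"
    and T: "V_table v ts ss \<sigma>" and a: "a \<in> Kalpha \<Gamma> \<alpha>"
  shows "piV \<Gamma> \<alpha> v a \<in> Kalpha \<Gamma> \<alpha>"
    "\<And>i u. i < length ts \<Longrightarrow> piV \<Gamma> \<alpha> v a (ss ! \<sigma> i @ u) = a (ts ! i @ u)"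
proof -
  obtain b where b: "b \<in> Kalpha \<Gamma> \<alpha>" "\<forall>i<length ts. \<forall>u. b (ss ! \<sigma> i @ u) = a (ts ! i @ u)"
    using K_exists[OF am T a] by blast
  have e: "piV \<Gamma> \<alpha> v a = b" by (rule piV_eq[OF inj T b])
  show "piV \<Gamma> \<alpha> v a \<in> Kalpha \<Gamma> \<alpha>" using e b by simp
  show "\<And>i u. i < length ts \<Longrightarrow> piV \<Gamma> \<alpha> v a (ss ! \<sigma> i @ u) = a (ts ! i @ u)" using e b by simp
qed

definition sw :: "bool list \<Rightarrow> (nat \<Rightarrow> bool) \<Rightarrow> (nat \<Rightarrow> bool)" where
  "sw t x = (if is_prefix_of t x then x(length t := \<not> x (length t)) else x)"

definition Ec :: "bool list \<Rightarrow> bool list list" where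
  "Ec t = map (\<lambda>k. take k t @ [\<not> t ! k]) [0..<length t]"

definition Dc :: "bool list \<Rightarrow> bool list list" where
  "Dc t = (t @ [False]) # (t @ [True]) # Ec t"

definition Dc' :: "bool list \<Rightarrow> bool list list" where
  "Dc' t = (t @ [True]) # (t @ [False]) # Ec t"

lemma Ec_elem: "c \<in> set (Ec t) \<longleftrightarrow> (\<exists>k<length t. c = take k t @ [\<not> t ! k])"
  by (auto simp: Ec_def)

lemma prefix_snoc: "is_prefix_of (t @ [b]) x \<longleftrightarrow> is_prefix_of t x \<and> x (length t) = b"
  by (auto simp: is_prefix_of_def nth_append less_Suc_eq)

lemma prefix_Ec: "is_prefix_of (take k t @ [\<not> t ! k]) x \<longleftrightarrow> (\<forall>i<k. x i = t ! i) \<and> x k = (\<not> t ! k)"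
  if "k < length t"
  using that by (auto simp: is_prefix_of_def nth_append less_Suc_eq min_def)

lemma distinct_Ec: "distinct (Ec t)"
  unfolding Ec_def by (rule distinct_map[THEN iffD2]) (auto simp: inj_on_def dest: arg_cong[where f=length])

lemma Ec_len: "c \<in> set (Ec t) \<Longrightarrow> length c \<le> length t"
  by (auto simp: Ec_elem)

lemma distinct_Dc: "distinct (Dc t)" "distinct (Dc' t)"
proof -
  have "t @ [b] \<notin> set (Ec t)" for b using Ec_len by fastforce
  thus "distinct (Dc t)" "distinct (Dc' t)" by (auto simp: Dc_def Dc'_def distinct_Ec)
qed

lemma set_Dc': "set (Dc' t) = set (Dc t)"
  by (auto simp: Dc_def Dc'_def)

lemma Ec_not_prefix:
  assumes "c \<in> set (Ec t)" shows "\<not> is_prefix_of t (pref c w)"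
proof -
  obtain k where k: "k < length t" "c = take k t @ [\<not> t ! k]" using assms by (auto simp: Ec_elem)
  have "pref c w k = (\<not> t ! k)" using k by (simp add: pref_def nth_append)
  thus ?thesis using k(1) by (auto simp: is_prefix_of_def)
qed

lemma Dc_code: "complete_prefix_code (set (Dc t))"
  unfolding complete_prefix_code_def
proof (intro conjI allI)
  show "finite (set (Dc t))" by simp
next
  fix x
  have ex: "\<exists>c. c \<in> set (Dc t) \<and> is_prefix_of c x"
  proof (cases "is_prefix_of t x")
    case True
    thus ?thesis by (intro exI[of _ "t @ [x (length t)]"]) (auto simp: Dc_def prefix_snoc)
  next
    case False
    hence "\<exists>k. k < length t \<and> x k \<noteq> t ! k" by (auto simp: is_prefix_of_def)
    define k where "k = (LEAST k. k < length t \<and> x k \<noteq> t ! k)"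
    have k: "k < length t" "x k \<noteq> t ! k" using LeastI_ex[OF \<open>\<exists>k. _\<close>] by (auto simp: k_def)
    have lt: "\<forall>i<k. x i = t ! i"
      using not_less_Least[where P="\<lambda>k. k < length t \<and> x k \<noteq> t ! k"] k(1) unfolding k_def
      by (meson less_trans)
    show ?thesis
      by (intro exI[of _ "take k t @ [\<not> t ! k]"]) (use k lt in \<open>auto simp: Dc_def Ec_elem prefix_Ec\<close>)
  qed
  have un: "c1 = c2" if "c1 \<in> set (Dc t)" "is_prefix_of c1 x" "c2 \<in> set (Dc t)" "is_prefix_of c2 x" for c1 c2
  proof -
    have ecp: False if "k < length t" "is_prefix_of (take k t @ [\<not> t ! k]) x" "is_prefix_of t x" for k
    proof -
      have "x k = (\<not> t ! k)" using that(2) unfolding prefix_Ec[OF that(1)] by simp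
      moreover have "x k = t ! k" using that(1,3) by (simp add: is_prefix_of_def)
      ultimately show False by simp
    qed
    have ecc: "j = k" if "j < length t" "k < length t" "is_prefix_of (take k t @ [\<not> t ! k]) x"
      "is_prefix_of (take j t @ [\<not> t ! j]) x" for j k
    proof (rule ccontr)
      assume "j \<noteq> k"
      hence "j < k \<or> k < j" by auto
      moreover have "x j = (\<not> t ! j)" "\<forall>i<j. x i = t ! i" using that(4) unfolding prefix_Ec[OF that(1)] by simp_all
      moreover have "x k = (\<not> t ! k)" "\<forall>i<k. x i = t ! i" using that(3) unfolding prefix_Ec[OF that(2)] by simp_all
      ultimately show False by auto
    qed
    have cs: "(\<exists>b. c = t @ [b]) \<or> (\<exists>k<length t. c = take k t @ [\<not> t ! k])" if "c \<in> set (Dc t)" for c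
      using that by (auto simp: Dc_def Ec_elem)
    have snoc: "c = t @ [x (length t)] \<and> is_prefix_of t x" if "c = t @ [b]" "is_prefix_of c x" for c b
      using that by (simp add: prefix_snoc)
    show ?thesis
    proof -
      { fix b1 b2 assume h: "c1 = t @ [b1]" "c2 = t @ [b2]"
        have "c1 = t @ [x (length t)]" using snoc[OF h(1) that(2)] by blast
        moreover have "c2 = t @ [x (length t)]" using snoc[OF h(2) that(4)] by blast
        ultimately have ?thesis by simp }
      moreover
      { fix b1 k2 assume h: "c1 = t @ [b1]" "k2 < length t" "c2 = take k2 t @ [\<not> t ! k2]"
        have "is_prefix_of t x" using snoc[OF h(1) that(2)] by blast
        moreover have "is_prefix_of (take k2 t @ [\<not> t ! k2]) x" using h(3) that(4) by simp
        ultimately have ?thesis using ecp[OF h(2)] by blast }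
      moreover
      { fix b2 k1 assume h: "c2 = t @ [b2]" "k1 < length t" "c1 = take k1 t @ [\<not> t ! k1]"
        have "is_prefix_of t x" using snoc[OF h(1) that(4)] by blast
        moreover have "is_prefix_of (take k1 t @ [\<not> t ! k1]) x" using h(3) that(2) by simp
        ultimately have ?thesis using ecp[OF h(2)] by blast }
      moreover
      { fix k1 k2 assume h: "k1 < length t" "c1 = take k1 t @ [\<not> t ! k1]" "k2 < length t" "c2 = take k2 t @ [\<not> t ! k2]"
        have "is_prefix_of (take k1 t @ [\<not> t ! k1]) x" using h(2) that(2) by simp
        moreover have "is_prefix_of (take k2 t @ [\<not> t ! k2]) x" using h(4) that(4) by simp
        ultimately have "k1 = k2" using ecc[OF h(3) h(1)] by blast
        hence ?thesis using h by simp }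
      ultimately show ?thesis using cs[OF that(1)] cs[OF that(3)] by blast
    qed
  qed
  show "\<exists>!c. c \<in> set (Dc t) \<and> is_prefix_of c x" using ex un by blast
qed

lemma sw_table: "V_table (sw t) (Dc t) (Dc' t) id"
  unfolding V_table_def
proof (intro conjI allI impI)
  show "length (Dc t) = length (Dc' t)" by (simp add: Dc_def Dc'_def)
  show "distinct (Dc t)" "distinct (Dc' t)" by (rule distinct_Dc)+
  show "complete_prefix_code (set (Dc t))" by (rule Dc_code)
  show "complete_prefix_code (set (Dc' t))" using Dc_code by (simp add: set_Dc')
  show "id permutes {..<length (Dc t)}" by (rule permutes_id)
next
  fix i w assume i: "i < length (Dc t)"
  show "sw t (pref (Dc t ! i) w) = pref (Dc' t ! id i) w"
  proof (cases i)
    case 0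
    have "is_prefix_of t (pref (t @ [False]) w)" by (simp add: pref_append is_prefix_pref)
    thus ?thesis using 0 by (auto simp: sw_def Dc_def Dc'_def pref_def nth_append fun_eq_iff)
  next
    case (Suc j)
    show ?thesis
    proof (cases j)
      case 0
      have "is_prefix_of t (pref (t @ [True]) w)" by (simp add: pref_append is_prefix_pref)
      thus ?thesis using 0 Suc by (auto simp: sw_def Dc_def Dc'_def pref_def nth_append fun_eq_iff)
    next
      case (Suc l)
      have l: "l < length (Ec t)" using i \<open>i = Suc j\<close> Suc by (simp add: Dc_def)
      hence "Ec t ! l \<in> set (Ec t)" by simp
      hence "\<not> is_prefix_of t (pref (Ec t ! l) w)" by (rule Ec_not_prefix)
      thus ?thesis using \<open>i = Suc j\<close> Suc by (simp add: sw_def Dc_def Dc'_def)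
    qed
  qed
qed

lemma prefix_upd: "is_prefix_of t (x(length t := b)) \<longleftrightarrow> is_prefix_of t x"
  by (simp add: is_prefix_of_def)

lemma sw_sw: "sw t (sw t x) = x"
  by (auto simp: sw_def prefix_upd fun_eq_iff)

lemma sw_cont: "continuous_on UNIV (sw t)"
proof (rule cont_fun)
  fix k
  show "\<exists>N. \<forall>x y. (\<forall>i<N. x i = y i) \<longrightarrow> sw t x k = sw t y k"
  proof (intro exI[of _ "length t + k + 1"] allI impI)
    fix x y :: "nat \<Rightarrow> bool" assume h: "\<forall>i<length t + k + 1. x i = y i"
    have "is_prefix_of t x \<longleftrightarrow> is_prefix_of t y" using h by (auto simp: is_prefix_of_def)
    moreover have "x k = y k" "x (length t) = y (length t)" using h by auto
    ultimately show "sw t x k = sw t y k" by (simp add: sw_def)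
  qed
qed

lemma sw_V: "sw t \<in> ThompsonV"
proof -
  have surj: "range (sw t) = UNIV" by (rule surjI[of "sw t" "sw t"]) (rule sw_sw)
  have "homeomorphism UNIV UNIV (sw t) (sw t)"
    by (simp add: homeomorphism_def sw_sw sw_cont surj)
  thus ?thesis using sw_table unfolding ThompsonV_def by blast
qed

lemma V_inj: assumes "v \<in> ThompsonV" shows "inj v"
proof -
  obtain g where "homeomorphism UNIV UNIV v g" using assms unfolding ThompsonV_def by blast
  hence "\<And>x. g (v x) = x" unfolding homeomorphism_def by blast
  thus ?thesis by (metis injI)
qed

lemma V_centre:
  assumes v: "v \<in> ThompsonV" and c: "\<And>t. v \<circ> sw t = sw t \<circ> v"
  shows "v = id"
proof
  fix x
  have inj: "inj v" using V_inj[OF v] .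
  have "v x i = x i" for i
  proof -
    define t where "t = map x [0..<Suc i]"
    have tp: "is_prefix_of t x" by (simp add: t_def is_prefix_of_def del: upt_Suc)
    have "sw t x \<noteq> x" using tp by (auto simp: sw_def fun_eq_iff t_def)
    hence "v (sw t x) \<noteq> v x" using inj by (metis injD)
    hence "sw t (v x) \<noteq> v x" using c[of t] by (metis comp_apply)
    hence "is_prefix_of t (v x)" by (auto simp: sw_def)
    thus "v x i = x i" by (simp add: t_def is_prefix_of_def del: upt_Suc)
  qed
  thus "v x = id x" by (simp add: fun_eq_iff)
qed

lemma id_V: "id \<in> ThompsonV"
proof -
  have "V_table id [[]] [[]] id"
    by (auto simp: V_table_def complete_prefix_code_def is_prefix_of_def pref_def permutes_id)
  moreover have "homeomorphism UNIV UNIV id id" by (simp add: homeomorphism_def)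
  ultimately show ?thesis unfolding ThompsonV_def by blast
qed

definition w0 :: "(nat \<Rightarrow> bool) \<Rightarrow> (nat \<Rightarrow> bool)" where
  "w0 x = (if \<not> x 0 then (\<lambda>k. if k = 0 then False else x (k - 1))
           else if \<not> x 1 then (\<lambda>k. if k = 0 then False else if k = 1 then True else x k)
           else (\<lambda>k. if k = 0 then True else x (Suc k)))"

definition w0i :: "(nat \<Rightarrow> bool) \<Rightarrow> (nat \<Rightarrow> bool)" where
  "w0i y = (if \<not> y 0 then (if \<not> y 1 then (\<lambda>k. y (Suc k))
              else (\<lambda>k. if k = 0 then True else if k = 1 then False else y k))
           else (\<lambda>k. if k = 0 then True else y (k - 1)))"

lemma w0i_w0: "w0i (w0 x) = x"
proof -
  have "w0i (w0 x) k = x k" for k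
    by (cases "x 0"; cases "x 1"; cases "k = 0"; cases "k = 1") (auto simp: w0_def w0i_def)
  thus ?thesis by auto
qed

lemma w0_w0i: "w0 (w0i y) = y"
proof -
  have "w0 (w0i y) k = y k" for k
    by (cases "y 0"; cases "y 1"; cases "k = 0"; cases "k = 1") (auto simp: w0_def w0i_def)
  thus ?thesis by auto
qed

lemma w0_cont: "continuous_on UNIV w0"
proof (rule cont_fun)
  fix k
  show "\<exists>N. \<forall>x y. (\<forall>i<N. x i = y i) \<longrightarrow> w0 x k = w0 y k"
  proof (intro exI[of _ "k + 2"] allI impI)
    fix x y :: "nat \<Rightarrow> bool" assume h: "\<forall>i<k + 2. x i = y i"
    have "x 0 = y 0" "x 1 = y 1" "x (k - 1) = y (k - 1)" "x k = y k" "x (Suc k) = y (Suc k)" using h by auto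
    thus "w0 x k = w0 y k" by (simp add: w0_def)
  qed
qed

lemma w0i_cont: "continuous_on UNIV w0i"
proof (rule cont_fun)
  fix k
  show "\<exists>N. \<forall>x y. (\<forall>i<N. x i = y i) \<longrightarrow> w0i x k = w0i y k"
  proof (intro exI[of _ "k + 2"] allI impI)
    fix x y :: "nat \<Rightarrow> bool" assume h: "\<forall>i<k + 2. x i = y i"
    have "x 0 = y 0" "x 1 = y 1" "x (k - 1) = y (k - 1)" "x k = y k" "x (Suc k) = y (Suc k)" using h by auto
    thus "w0i x k = w0i y k" by (simp add: w0i_def)
  qed
qed

lemma prefix_Nil: "is_prefix_of [] x" by (simp add: is_prefix_of_def)

lemma prefix_Cons: "is_prefix_of (b # t) x \<longleftrightarrow> x 0 = b \<and> is_prefix_of t (\<lambda>k. x (Suc k))"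
  by (auto simp: is_prefix_of_def less_Suc_eq_0_disj)

lemma w0_table: "V_table w0 [[False],[True,False],[True,True]] [[False,False],[False,True],[True]] id"
  unfolding V_table_def
proof (intro conjI allI impI)
  show "complete_prefix_code (set [[False], [True, False], [True, True]])"
    unfolding complete_prefix_code_def
  proof (intro conjI allI)
    fix x
    show "\<exists>!c. c \<in> set [[False], [True, False], [True, True]] \<and> is_prefix_of c x"
      by (rule ex1I[of _ "if \<not> x 0 then [False] else if \<not> x 1 then [True, False] else [True, True]"])
        (auto simp: prefix_Cons prefix_Nil)
  qed simp
  show "complete_prefix_code (set [[False, False], [False, True], [True]])"
    unfolding complete_prefix_code_def
  proof (intro conjI allI)
    fix x
    show "\<exists>!c. c \<in> set [[False, False], [False, True], [True]] \<and> is_prefix_of c x"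
      by (rule ex1I[of _ "if x 0 then [True] else if \<not> x 1 then [False, False] else [False, True]"])
        (auto simp: prefix_Cons prefix_Nil)
  qed simp
  show "id permutes {..<length [[False], [True, False], [True, True]]}" by (rule permutes_id)
next
  fix i w assume "i < length [[False], [True, False], [True, True]]"
  hence "i = 0 \<or> i = 1 \<or> i = 2" by auto
  thus "w0 (pref ([[False], [True, False], [True, True]] ! i) w) = pref ([[False, False], [False, True], [True]] ! id i) w"
  proof (elim disjE)
    assume "i = 0"
    have "w0 (pref [False] w) k = pref [False, False] w k" for k
      by (cases k) (auto simp: w0_def pref_def nth_Cons')
    thus ?thesis using \<open>i = 0\<close> by auto
  next
    assume "i = 1"
    have "w0 (pref [True, False] w) k = pref [False, True] w k" for k
      by (cases k) (auto simp: w0_def pref_def nth_Cons')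
    thus ?thesis using \<open>i = 1\<close> by auto
  next
    assume "i = 2"
    have "w0 (pref [True, True] w) k = pref [True] w k" for k
      by (cases k) (auto simp: w0_def pref_def nth_Cons')
    thus ?thesis using \<open>i = 2\<close> by auto
  qed
qed (simp_all)

lemma w0_V: "w0 \<in> ThompsonV"
proof -
  have s1: "range w0 = UNIV" by (rule surjI[of w0 w0i]) (rule w0_w0i)
  have s2: "range w0i = UNIV" by (rule surjI[of w0i w0]) (rule w0i_w0)
  have "homeomorphism UNIV UNIV w0 w0i"
    by (simp add: homeomorphism_def w0_w0i w0i_w0 w0_cont w0i_cont s1 s2)
  thus ?thesis using w0_table unfolding ThompsonV_def by blast
qed

lemma id_table: "V_table id [[]] [[]] id"
  by (auto simp: V_table_def complete_prefix_code_def is_prefix_of_def pref_def permutes_id)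

lemma piV_id: "b \<in> Kalpha \<Gamma> \<alpha> \<Longrightarrow> piV \<Gamma> \<alpha> id b = b"
  by (rule piV_eq[OF inj_on_id id_table]) auto

lemma const_K: "z \<in> carrier \<Gamma> \<Longrightarrow> \<alpha> z = z \<Longrightarrow> (\<lambda>_. z) \<in> Kalpha \<Gamma> \<alpha>"
  by (simp add: Kalpha_def)

lemma piV_const:
  assumes "v \<in> ThompsonV" "z \<in> carrier \<Gamma>" "\<alpha> z = z"
  shows "piV \<Gamma> \<alpha> v (\<lambda>_. z) = (\<lambda>_. z)"
proof -
  obtain ts ss \<sigma> where T: "V_table v ts ss \<sigma>" using assms(1) unfolding ThompsonV_def by blast
  have cK: "(\<lambda>_. z) \<in> Kalpha \<Gamma> \<alpha>" using assms(2,3) by (rule const_K)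
  show ?thesis by (rule piV_eq[OF V_inj[OF assms(1)] T cK]) simp
qed

lemma pow_fix: "\<alpha> z = z \<Longrightarrow> (\<alpha> ^^ n) z = z"
  by (induction n) auto

lemma pow_inj:
  assumes inj: "inj_on \<alpha> (carrier \<Gamma>)" and am: "\<And>g. g \<in> carrier \<Gamma> \<Longrightarrow> \<alpha> g \<in> carrier \<Gamma>"
  shows "x \<in> carrier \<Gamma> \<Longrightarrow> y \<in> carrier \<Gamma> \<Longrightarrow> (\<alpha> ^^ n) x = (\<alpha> ^^ n) y \<Longrightarrow> x = y"
proof (induction n arbitrary: x y)
  case 0 thus ?case by simp
next
  case (Suc n)
  have "(\<alpha> ^^ n) (\<alpha> x) = (\<alpha> ^^ n) (\<alpha> y)" using Suc.prems(3) by (simp only: funpow_Suc_right o_apply)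
  hence "\<alpha> x = \<alpha> y" using Suc.IH am Suc.prems(1,2) by blast
  thus ?case using inj Suc.prems(1,2) by (meson inj_onD)
qed

lemma Kval_welldef_le:
  assumes a: "a \<in> Kalpha \<Gamma> \<alpha>" and e: "pref u zeros = pref u' zeros" and le: "length u \<le> length u'"
  shows "(\<alpha> ^^ length u) (a u) = (\<alpha> ^^ length u') (a u')"
proof -
  define n where "n = length u' - length u"
  have u': "u' = u @ replicate n False"
  proof (rule nth_equalityI)
    show "length u' = length (u @ replicate n False)" using le by (simp add: n_def)
  next
    fix i assume i: "i < length u'"
    have "(u @ replicate n False) ! i = pref u zeros i" using i le by (intro app_rep_nth) (simp add: n_def)
    also have "\<dots> = pref u' zeros i" using e by simp
    also have "\<dots> = u' ! i" using i by (simp add: pref_def)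
    finally show "u' ! i = (u @ replicate n False) ! i" by simp
  qed
  have "a u = (\<alpha> ^^ n) (a u')" using K_iter[OF a, of u n] u' by simp
  hence "(\<alpha> ^^ length u) (a u) = (\<alpha> ^^ (length u + n)) (a u')" by (simp add: funpow_add)
  moreover have "length u + n = length u'" using le by (simp add: n_def)
  ultimately show ?thesis by simp
qed

lemma Kval_pref:
  assumes a: "a \<in> Kalpha \<Gamma> \<alpha>"
  shows "Kval \<alpha> a (pref u zeros) = (\<alpha> ^^ length u) (a u)"
proof -
  define u' where "u' = (SOME u'. pref u zeros = pref u' zeros)"
  have e: "pref u zeros = pref u' zeros" unfolding u'_def by (rule someI[of _ u]) simp
  have "(\<alpha> ^^ length u') (a u') = (\<alpha> ^^ length u) (a u)"
  proof (cases "length u \<le> length u'")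
    case True thus ?thesis using Kval_welldef_le[OF a e] by simp
  next
    case False thus ?thesis using Kval_welldef_le[OF a e[symmetric]] by simp
  qed
  thus ?thesis by (simp add: Kval_def u'_def)
qed

lemma mult_pair: "Galpha_mult \<Gamma> \<alpha> (a, v) (b, w) = ((\<lambda>u. a u \<otimes>\<^bsub>\<Gamma>\<^esub> piV \<Gamma> \<alpha> v b u), v \<circ> w)"
  by (simp add: Galpha_mult_def)

theorem mainTheorem9:
  fixes \<Gamma> :: "('g, 'b) monoid_scheme" and \<alpha> :: "'g \<Rightarrow> 'g"
  assumes "group \<Gamma>" and "\<alpha> \<in> iso \<Gamma> \<Gamma>"
  shows "Galpha_centre \<Gamma> \<alpha> =
    {(a, id) | a. a \<in> Kalpha \<Gamma> \<alpha> \<and>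
       (\<exists>z \<in> group_centre \<Gamma> \<inter> fixed_points \<Gamma> \<alpha>. \<forall>x \<in> Q2. Kval \<alpha> a x = z)}"
proof -
  interpret G: group \<Gamma> by (rule assms(1))
  have hom: "\<alpha> \<in> hom \<Gamma> \<Gamma>" and bij: "bij_betw \<alpha> (carrier \<Gamma>) (carrier \<Gamma>)"
    using assms(2) by (auto simp: iso_def)
  have am: "\<And>g. g \<in> carrier \<Gamma> \<Longrightarrow> \<alpha> g \<in> carrier \<Gamma>" using hom by (rule hom_in_carrier)
  have ainj: "inj_on \<alpha> (carrier \<Gamma>)" using bij by (simp add: bij_betw_def)
  have aone: "\<alpha> \<one>\<^bsub>\<Gamma>\<^esub> = \<one>\<^bsub>\<Gamma>\<^esub>" using hom_one[OF hom assms(1) assms(1)] .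
  define one where "one = (\<lambda>_::bool list. \<one>\<^bsub>\<Gamma>\<^esub>)"
  have oneK: "one \<in> Kalpha \<Gamma> \<alpha>" unfolding one_def by (rule const_K) (simp_all add: aone)
  show ?thesis
  proof (rule equalityI[OF subsetI subsetI])
    fix g assume g: "g \<in> Galpha_centre \<Gamma> \<alpha>"
    obtain a v where gav: "g = (a, v)" by (cases g)
    have aK: "a \<in> Kalpha \<Gamma> \<alpha>" and vV: "v \<in> ThompsonV"
      using g gav by (auto simp: Galpha_centre_def Galpha_carrier_def)
    have comm: "\<And>b w. b \<in> Kalpha \<Gamma> \<alpha> \<Longrightarrow> w \<in> ThompsonV \<Longrightarrow>
        Galpha_mult \<Gamma> \<alpha> (a, v) (b, w) = Galpha_mult \<Gamma> \<alpha> (b, w) (a, v)"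
      using g gav by (auto simp: Galpha_centre_def Galpha_carrier_def)
    have "v \<circ> sw t = sw t \<circ> v" for t
      using comm[OF oneK sw_V[of t]] by (simp add: mult_pair)
    hence vid: "v = id" by (rule V_centre[OF vV])
    have inv: "a u = piV \<Gamma> \<alpha> w a u" if w: "w \<in> ThompsonV" for w u
    proof -
      obtain ts ss \<sigma> where T: "V_table w ts ss \<sigma>" using w unfolding ThompsonV_def by blast
      have pK: "piV \<Gamma> \<alpha> w a \<in> Kalpha \<Gamma> \<alpha>" by (rule piV_prop(1)[OF am V_inj[OF w] T aK])
      have "(\<lambda>u. a u \<otimes>\<^bsub>\<Gamma>\<^esub> one u) = (\<lambda>u. one u \<otimes>\<^bsub>\<Gamma>\<^esub> piV \<Gamma> \<alpha> w a u)"
        using comm[OF oneK w] by (simp add: mult_pair vid piV_id[OF oneK])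
      hence "a u \<otimes>\<^bsub>\<Gamma>\<^esub> \<one>\<^bsub>\<Gamma>\<^esub> = \<one>\<^bsub>\<Gamma>\<^esub> \<otimes>\<^bsub>\<Gamma>\<^esub> piV \<Gamma> \<alpha> w a u"
        unfolding one_def by meson
      thus ?thesis using K_carrier[OF aK, of u] K_carrier[OF pK, of u] by simp
    qed
    have swap: "a (t @ [True]) = a (t @ [False])" for t
    proof -
      have "piV \<Gamma> \<alpha> (sw t) a (Dc' t ! id 0 @ []) = a (Dc t ! 0 @ [])"
        by (rule piV_prop(2)[OF am V_inj[OF sw_V] sw_table aK]) (simp_all add: Dc_def)
      thus ?thesis using inv[OF sw_V[of t], of "t @ [True]"] by (simp add: Dc_def Dc'_def)
    qed
    have w0e: "a [False, False] = a [False]"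
    proof -
      have "piV \<Gamma> \<alpha> w0 a ([[False,False],[False,True],[True]] ! id 0 @ []) = a ([[False],[True,False],[True,True]] ! 0 @ [])"
        by (rule piV_prop(2)[OF am V_inj[OF w0_V] w0_table aK]) simp_all
      thus ?thesis using inv[OF w0_V, of "[False, False]"] by simp
    qed
    define c where "c = a [False]"
    have cC: "c \<in> carrier \<Gamma>" unfolding c_def by (rule K_carrier[OF aK])
    have cfix: "\<alpha> c = c" using K_rule[OF aK, of "[False]"] w0e by (simp add: c_def)
    have allc: "a u = c" for u
    proof (induction u rule: rev_induct)
      case Nil
      thus ?case using K_rule[OF aK, of "[]"] cfix by (simp add: c_def)
    next
      case (snoc b u)
      have "\<alpha> (a (u @ [False])) = \<alpha> c" using K_rule[OF aK, of u] snoc cfix by simp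
      hence "a (u @ [False]) = c" using ainj K_carrier[OF aK] cC by (meson inj_onD)
      thus ?case using swap[of u] by (cases b) simp_all
    qed
    have central: "c \<otimes>\<^bsub>\<Gamma>\<^esub> h = h \<otimes>\<^bsub>\<Gamma>\<^esub> c" if h: "h \<in> carrier \<Gamma>" for h
    proof -
      define \<beta> where "\<beta> = inv_into (carrier \<Gamma>) \<alpha>"
      have bm: "\<And>y. y \<in> carrier \<Gamma> \<Longrightarrow> \<beta> y \<in> carrier \<Gamma>"
        using bij_betw_inv_into[OF bij] unfolding \<beta>_def by (meson bij_betwE)
      have ab: "\<And>y. y \<in> carrier \<Gamma> \<Longrightarrow> \<alpha> (\<beta> y) = y"
        unfolding \<beta>_def by (rule bij_betw_inv_into_right[OF bij])
      define b where "b u = (\<beta> ^^ length u) h" for u :: "bool list"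
      have bK: "b \<in> Kalpha \<Gamma> \<alpha>"
        unfolding Kalpha_def
      proof (intro CollectI conjI allI)
        fix u :: "bool list" show "b u \<in> carrier \<Gamma>" unfolding b_def by (rule pow_carrier[of \<Gamma> \<beta>, OF bm h])
      next
        fix u :: "bool list"
        have "(\<beta> ^^ length u) h \<in> carrier \<Gamma>" by (rule pow_carrier[of \<Gamma> \<beta>, OF bm h])
        thus "b u = \<alpha> (b (u @ [False]))" unfolding b_def by (simp add: ab)
      qed
      have "Galpha_mult \<Gamma> \<alpha> (a, v) (b, id) = Galpha_mult \<Gamma> \<alpha> (b, id) (a, v)"
        by (rule comm[OF bK id_V])
      hence "(\<lambda>u. a u \<otimes>\<^bsub>\<Gamma>\<^esub> b u) = (\<lambda>u. b u \<otimes>\<^bsub>\<Gamma>\<^esub> a u)"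
        by (simp add: mult_pair vid piV_id[OF bK] piV_id[OF aK])
      hence "a [] \<otimes>\<^bsub>\<Gamma>\<^esub> b [] = b [] \<otimes>\<^bsub>\<Gamma>\<^esub> a []" by meson
      thus ?thesis by (simp add: allc b_def)
    qed
    have kv: "\<forall>x\<in>Q2. Kval \<alpha> a x = c"
      by (simp add: Kval_def allc pow_fix[of \<alpha> c, OF cfix])
    have "c \<in> group_centre \<Gamma> \<inter> fixed_points \<Gamma> \<alpha>"
      using cC cfix central by (simp add: group_centre_def fixed_points_def)
    thus "g \<in> {(a, id) | a. a \<in> Kalpha \<Gamma> \<alpha> \<and>
       (\<exists>z \<in> group_centre \<Gamma> \<inter> fixed_points \<Gamma> \<alpha>. \<forall>x \<in> Q2. Kval \<alpha> a x = z)}"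
      using gav vid aK kv by blast
  next
    fix g :: "(bool list \<Rightarrow> 'g) \<times> ((nat \<Rightarrow> bool) \<Rightarrow> (nat \<Rightarrow> bool))"
    assume "g \<in> {(a, id) | a. a \<in> Kalpha \<Gamma> \<alpha> \<and>
       (\<exists>z \<in> group_centre \<Gamma> \<inter> fixed_points \<Gamma> \<alpha>. \<forall>x \<in> Q2. Kval \<alpha> a x = z)}"
    then obtain a z where g: "g = (a, id)" and aK: "a \<in> Kalpha \<Gamma> \<alpha>"
      and z: "z \<in> group_centre \<Gamma>" "z \<in> fixed_points \<Gamma> \<alpha>" and kv: "\<forall>x\<in>Q2. Kval \<alpha> a x = z"
      by blast
    have zC: "z \<in> carrier \<Gamma>" and zf: "\<alpha> z = z" and zc: "\<And>h. h \<in> carrier \<Gamma> \<Longrightarrow> z \<otimes>\<^bsub>\<Gamma>\<^esub> h = h \<otimes>\<^bsub>\<Gamma>\<^esub> z"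
      using z by (auto simp: group_centre_def fixed_points_def)
    have az: "a u = z" for u
    proof -
      have "pref u zeros \<in> Q2" by (auto simp: Q2_def)
      hence "(\<alpha> ^^ length u) (a u) = (\<alpha> ^^ length u) z"
        using kv Kval_pref[OF aK, of u] pow_fix[of \<alpha> z, OF zf] by simp
      thus ?thesis using pow_inj[OF ainj am K_carrier[OF aK, of u] zC] by blast
    qed
    hence aeq: "a = (\<lambda>_. z)" by auto
    have "g \<in> Galpha_carrier \<Gamma> \<alpha>" using g aK id_V by (simp add: Galpha_carrier_def)
    moreover have "Galpha_mult \<Gamma> \<alpha> g h = Galpha_mult \<Gamma> \<alpha> h g" if h: "h \<in> Galpha_carrier \<Gamma> \<alpha>" for h
    proof -
      obtain b w where hbw: "h = (b, w)" by (cases h)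
      have bK: "b \<in> Kalpha \<Gamma> \<alpha>" and wV: "w \<in> ThompsonV" using h hbw by (auto simp: Galpha_carrier_def)
      have "(\<lambda>u. z \<otimes>\<^bsub>\<Gamma>\<^esub> b u) = (\<lambda>u. b u \<otimes>\<^bsub>\<Gamma>\<^esub> z)" using zc K_carrier[OF bK] by auto
      thus ?thesis using g hbw aeq
        by (simp add: mult_pair piV_id[OF bK] piV_const[of w z \<Gamma> \<alpha>, OF wV zC zf])
    qed
    ultimately show "g \<in> Galpha_centre \<Gamma> \<alpha>" by (simp add: Galpha_centre_def)
  qed
qed

end
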